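(* Let $A$ be an MV-algebra and $d$ a $(\odot,\vee)$-derivation on $A$. The following are equivalent: (1) $d=\mathrm{Id}_A$; (2) $d(1)=1$; (3) $d(a)=1$ for some $a\in A$; (4) $d$ is surjective; (5) $d(x\oplus y)=(d(x)\oplus y)\wedge(x\oplus d(y))$ for all $x,y\in A$.
   Context: An MV-algebra is an algebra $(A,\oplus,{}^*,0)$ of type $(2,1,0)$ satisfying: $x\oplus(y\oplus z)=(x\oplus y)\oplus z$, $x\oplus y=y\oplus x$, $x\oplus 0=x$, $x^{**}=x$, $x\oplus 0^*=0^*$, $(x^*\oplus y)^*\oplus y=(y^*\oplus x)^*\oplus x$. Put $1=0^*$ and $x\odot y=(x^*\oplus y^* )^*$. The natural order is $x\le y$ iff $x^*\oplus y=1$, with lattice operations $x\vee y=(x\odot y^* )\oplus y$, $x\wedge y=x\odot(x^*\oplus y)$. A $(\odot,\vee)$-derivation on $A$ is a map $d:A\to A$ with $d(x\odot y)=(d(x)\odot y)\vee(x\odot d(y))$ for all $x,y\in A$. *)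

theory Defs
  imports Main
begin

locale mv_algebra =
  fixes oplus :: "'a \<Rightarrow> 'a \<Rightarrow> 'a"
    and neg :: "'a \<Rightarrow> 'a"
    and zero :: "'a"
  assumes assoc: "oplus x (oplus y z) = oplus (oplus x y) z"
    and comm: "oplus x y = oplus y x"
    and zero_neutral: "oplus x zero = x"
    and neg_neg: "neg (neg x) = x"
    and absorb: "oplus x (neg zero) = neg zero"
    and luk: "oplus (neg (oplus (neg x) y)) y = oplus (neg (oplus (neg y) x)) x"

definition mv_one :: "('a \<Rightarrow> 'a) \<Rightarrow> 'a \<Rightarrow> 'a" where
  "mv_one neg zero = neg zero"

definition mv_odot :: "('a \<Rightarrow> 'a \<Rightarrow> 'a) \<Rightarrow> ('a \<Rightarrow> 'a) \<Rightarrow> 'a \<Rightarrow> 'a \<Rightarrow> 'a" where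
  "mv_odot oplus neg x y = neg (oplus (neg x) (neg y))"

definition mv_join :: "('a \<Rightarrow> 'a \<Rightarrow> 'a) \<Rightarrow> ('a \<Rightarrow> 'a) \<Rightarrow> 'a \<Rightarrow> 'a \<Rightarrow> 'a" where
  "mv_join oplus neg x y = oplus (mv_odot oplus neg x (neg y)) y"

definition mv_meet :: "('a \<Rightarrow> 'a \<Rightarrow> 'a) \<Rightarrow> ('a \<Rightarrow> 'a) \<Rightarrow> 'a \<Rightarrow> 'a \<Rightarrow> 'a" where
  "mv_meet oplus neg x y = mv_odot oplus neg x (oplus (neg x) y)"

definition odot_join_derivation ::
  "('a \<Rightarrow> 'a \<Rightarrow> 'a) \<Rightarrow> ('a \<Rightarrow> 'a) \<Rightarrow> ('a \<Rightarrow> 'a) \<Rightarrow> bool" where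
  "odot_join_derivation oplus neg d \<longleftrightarrow>
     (\<forall>x y. d (mv_odot oplus neg x y) =
        mv_join oplus neg (mv_odot oplus neg (d x) y) (mv_odot oplus neg x (d y)))"

end

theory Submission
  imports Defs
begin

theorem proposition3p4:
  fixes oplus :: "'a \<Rightarrow> 'a \<Rightarrow> 'a" and neg :: "'a \<Rightarrow> 'a" and zero :: 'a
    and d :: "'a \<Rightarrow> 'a"
  assumes "mv_algebra oplus neg zero"
    and "odot_join_derivation oplus neg d"
  shows "(d = id \<longleftrightarrow> d (mv_one neg zero) = mv_one neg zero)
       \<and> (d (mv_one neg zero) = mv_one neg zero \<longleftrightarrow> (\<exists>a. d a = mv_one neg zero))
       \<and> ((\<exists>a. d a = mv_one neg zero) \<longleftrightarrow> surj d)
       \<and> (surj d \<longleftrightarrow>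
           (\<forall>x y. d (oplus x y) = mv_meet oplus neg (oplus (d x) y) (oplus x (d y))))"
proof -
  interpret mv_algebra oplus neg zero by fact
  have D: "\<And>x y. d (mv_odot oplus neg x y) =
        mv_join oplus neg (mv_odot oplus neg (d x) y) (mv_odot oplus neg x (d y))"
    using assms(2) unfolding odot_join_derivation_def by blast
  have one_abs: "\<And>x. oplus (neg zero) x = neg zero" using absorb comm by metis
  have zl: "\<And>x. oplus zero x = x" using zero_neutral comm by metis
  have compl: "\<And>y. oplus (neg y) y = neg zero"
  proof -
    fix y
    have "oplus (neg (oplus (neg (neg zero)) y)) y = oplus (neg (oplus (neg y) (neg zero))) (neg zero)"
      by (rule luk)
    thus "oplus (neg y) y = neg zero" by (simp add: neg_neg zl absorb)
  qed
  have sum0: "\<And>u b. oplus u b = zero \<Longrightarrow> b = zero"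
  proof -
    fix u b assume h: "oplus u b = zero"
    have "oplus (neg b) (oplus u b) = neg zero"
      by (metis assoc comm compl one_abs)
    hence "neg b = neg zero" using h zero_neutral by simp
    thus "b = zero" by (metis neg_neg)
  qed
  have jc: "\<And>a b. mv_join oplus neg a b = mv_join oplus neg b a"
    unfolding mv_join_def mv_odot_def by (simp add: neg_neg luk)
  have le: "\<And>x. oplus (neg (d x)) x = neg zero"
  proof -
    fix x
    have "d (mv_odot oplus neg x (neg x)) = zero"
    proof -
      have "mv_odot oplus neg x (neg x) = zero"
        unfolding mv_odot_def by (metis neg_neg comm compl)
      moreover have "d zero = zero"
      proof -
        have z: "\<And>y. mv_odot oplus neg zero y = zero"
          unfolding mv_odot_def by (simp add: one_abs neg_neg)
        have z2: "\<And>y. mv_odot oplus neg y zero = zero"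
          unfolding mv_odot_def by (simp add: absorb neg_neg)
        have "d zero = d (mv_odot oplus neg zero zero)" by (simp add: z)
        also have "\<dots> = mv_join oplus neg zero zero" using D[of zero zero] by (simp only: z z2)
        also have "\<dots> = zero" unfolding mv_join_def
          by (simp add: z zero_neutral)
        finally show ?thesis .
      qed
      ultimately show ?thesis by simp
    qed
    hence "mv_join oplus neg (mv_odot oplus neg (d x) (neg x)) (mv_odot oplus neg x (d (neg x))) = zero"
      using D by simp
    hence "mv_join oplus neg (mv_odot oplus neg x (d (neg x))) (mv_odot oplus neg (d x) (neg x)) = zero"
      using jc by metis
    hence "mv_odot oplus neg (d x) (neg x) = zero" unfolding mv_join_def by (rule sum0)
    hence "neg (oplus (neg (d x)) x) = zero" unfolding mv_odot_def by (simp add: neg_neg)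
    thus "oplus (neg (d x)) x = neg zero" by (metis neg_neg)
  qed
  have P2: "d (neg zero) = neg zero \<Longrightarrow> d = id"
  proof
    fix x assume h: "d (neg zero) = neg zero"
    have o1: "\<And>x. mv_odot oplus neg x (neg zero) = x" unfolding mv_odot_def
      by (simp add: neg_neg zero_neutral)
    have "d x = d (mv_odot oplus neg x (neg zero))" by (simp add: o1)
    also have "\<dots> = mv_join oplus neg (d x) x" using D[of x "neg zero"] by (simp only: h o1)
    also have "\<dots> = x" unfolding mv_join_def mv_odot_def
      by (simp add: neg_neg le zl)
    finally show "d x = id x" by simp
  qed
  have P3: "\<And>a. d a = neg zero \<Longrightarrow> d (neg zero) = neg zero"
  proof -
    fix a assume h: "d a = neg zero"
    have "a = neg zero" using le[of a] h by (simp add: neg_neg zl)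
    thus "d (neg zero) = neg zero" using h by simp
  qed
  have P5: "(\<forall>x y. d (oplus x y) = mv_meet oplus neg (oplus (d x) y) (oplus x (d y)))
     \<Longrightarrow> d (neg zero) = neg zero"
  proof -
    assume h: "\<forall>x y. d (oplus x y) = mv_meet oplus neg (oplus (d x) y) (oplus x (d y))"
    have "d (oplus (neg zero) (neg zero)) = mv_meet oplus neg (neg zero) (neg zero)"
      using h[rule_format, of "neg zero" "neg zero"] by (simp only: absorb one_abs)
    thus ?thesis unfolding mv_meet_def mv_odot_def
      by (simp add: absorb neg_neg zero_neutral compl)
  qed
  have I5: "d = id \<Longrightarrow> (\<forall>x y. d (oplus x y) = mv_meet oplus neg (oplus (d x) y) (oplus x (d y)))"
  proof -
    assume h: "d = id"
    have "\<And>a. mv_meet oplus neg a a = a"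
      unfolding mv_meet_def mv_odot_def by (simp add: compl neg_neg zero_neutral)
    thus ?thesis using h by simp
  qed
  have S: "surj d \<Longrightarrow> \<exists>a. d a = neg zero" by (metis surjD)
  have S2: "d = id \<Longrightarrow> surj d" by simp
  show ?thesis unfolding mv_one_def
    using P2 P3 P5 I5 S S2 by auto
qed

end
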